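(* Let $S\in\Delta^1_n$ contain a pair of symmetric arcs $(u,v)$ and $(v,u)$, and let $S'$ be the sidigraph obtained from $S$ by deleting one of these two arcs. Then $E(S')<E(S)$.
   Context: A sidigraph is a digraph (no loops, at most one arc from $u$ to $v$) with a sign $\pm1$ on each arc; its eigenvalues are those of its adjacency matrix, whose $(i,j)$ entry is the sign of the arc from $v_i$ to $v_j$ if it exists and $0$ otherwise. The energy of a sidigraph with eigenvalues $z_1,\dots,z_n$ is $E(S)=\sum_{j=1}^n|\Re z_j|$. The sign of a directed cycle is the product of its arc signs. $\Delta^1_n$ is the class of sidigraphs on $n$ vertices whose underlying digraph is bipartite and in which every directed cycle of length $\equiv 0\pmod 4$ is negative and every directed cycle of length $\equiv 2\pmod 4$ is positive. *)

theory Defs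
  imports Complex_Main "HOL-Computational_Algebra.Polynomial" "Jordan_Normal_Form.Char_Poly"
begin

text \<open>A sidigraph on vertex set {0..<n} is identified with its adjacency matrix:
  an n x n integer matrix with zero diagonal (no loops) and entries in {-1,0,1};
  entry (i,j) is the sign of the arc from i to j, or 0 if there is no arc.\<close>

definition sidigraph :: "nat \<Rightarrow> int mat \<Rightarrow> bool" where
  "sidigraph n A \<longleftrightarrow> A \<in> carrier_mat n n \<and> (\<forall>i<n. A $$ (i,i) = 0) \<and>
     (\<forall>i<n. \<forall>j<n. A $$ (i,j) \<in> {-1,0,1})"

definition arc :: "int mat \<Rightarrow> nat \<Rightarrow> nat \<Rightarrow> bool" where
  "arc A i j \<longleftrightarrow> i < dim_row A \<and> j < dim_col A \<and> A $$ (i,j) \<noteq> 0"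

definition dir_cycle :: "int mat \<Rightarrow> nat list \<Rightarrow> bool" where
  "dir_cycle A vs \<longleftrightarrow> length vs \<ge> 2 \<and> distinct vs \<and>
     (\<forall>i<length vs. arc A (vs ! i) (vs ! ((i + 1) mod length vs)))"

definition cycle_sign :: "int mat \<Rightarrow> nat list \<Rightarrow> int" where
  "cycle_sign A vs = (\<Prod>i<length vs. A $$ (vs ! i, vs ! ((i + 1) mod length vs)))"

definition bipartite_underlying :: "nat \<Rightarrow> int mat \<Rightarrow> bool" where
  "bipartite_underlying n A \<longleftrightarrow> (\<exists>c :: nat \<Rightarrow> bool. \<forall>i<n. \<forall>j<n. arc A i j \<longrightarrow> c i \<noteq> c j)"

definition Delta1 :: "nat \<Rightarrow> int mat set" where
  "Delta1 n = {A. sidigraph n A \<and> bipartite_underlying n A \<and>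
     (\<forall>vs. dir_cycle A vs \<longrightarrow>
        (length vs mod 4 = 0 \<longrightarrow> cycle_sign A vs = -1) \<and>
        (length vs mod 4 = 2 \<longrightarrow> cycle_sign A vs = 1))}"

definition eigenvalues_ms :: "int mat \<Rightarrow> complex multiset" where
  "eigenvalues_ms A = proots (char_poly (map_mat complex_of_int A))"

definition energy :: "int mat \<Rightarrow> real" where
  "energy A = (\<Sum>z\<in>#eigenvalues_ms A. \<bar>Re z\<bar>)"

definition delete_arc :: "int mat \<Rightarrow> nat \<Rightarrow> nat \<Rightarrow> int mat" where
  "delete_arc A u v = mat (dim_row A) (dim_col A) (\<lambda>(i,j). if (i,j) = (u,v) then 0 else A $$ (i,j))"

end

theory Submission
  imports Defs "HOL-Real_Asymp.Real_Asymp" "HOL-Combinatorics.Cycles"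
begin


lemma sign_cycle_of_list:
  "distinct cs \<Longrightarrow> sign (cycle_of_list cs) = (-1) ^ (length cs - 1)"
proof (induct cs rule: cycle_of_list.induct)
  case (1 i j cs)
  then have ij: "i \<noteq> j" by auto
  have "sign (cycle_of_list (i # j # cs)) = sign (transpose i j) * sign (cycle_of_list (j # cs))"
    by (simp add: sign_compose permutation_swap_id permutation_of_cycle)
  also have "\<dots> = - ((-1) ^ (length cs))" using 1 ij by (simp add: sign_swap_id)
  finally show ?case by (simp del: cycle_of_list.simps)
qed simp_all

lemma dir_cycle_even:
  assumes bip: "bipartite_underlying n A" and dc: "dir_cycle A vs" and sub: "set vs \<subseteq> {0..<n}"
  shows "even (length vs)"
proof -
  have "\<exists>col::nat\<Rightarrow>bool. \<forall>i<n. \<forall>j<n. arc A i j \<longrightarrow> col i \<noteq> col j"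
    using bip unfolding bipartite_underlying_def .
  then obtain col :: "nat \<Rightarrow> bool" where col: "\<forall>i<n. \<forall>j<n. arc A i j \<longrightarrow> col i \<noteq> col j" ..
  have colr: "col i \<noteq> col j" if "i < n" "j < n" "arc A i j" for i j
    using col that by simp
  define L where "L = length vs"
  have L2: "L \<ge> 2" using dc unfolding dir_cycle_def L_def by simp
  have arcs: "arc A (vs!i) (vs!((i+1) mod L))" if "i < L" for i
    using dc that unfolding dir_cycle_def L_def by simp
  have inn: "vs!i < n" if "i < L" for i
  proof -
    have "vs!i \<in> set vs" using that nth_mem unfolding L_def by simp
    then show ?thesis using sub by auto
  qed
  have step: "col (vs!(i+1)) = (\<not> col (vs!i))" if "i + 1 < L" for i
  proof -
    have "arc A (vs!i) (vs!(i+1))" using arcs[of i] that by simp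
    moreover have "vs!i < n" "vs!(i+1) < n" using inn that by auto
    ultimately have "col (vs!i) \<noteq> col (vs!(i+1))" by (rule colr[rotated 2])
    then show ?thesis by (cases "col (vs!i)") simp_all
  qed
  have alt: "k < L \<Longrightarrow> col (vs!k) = (col (vs!0) \<noteq> odd k)" for k
  proof (induct k)
    case (Suc k)
    have "col (vs!(Suc k)) = (\<not> col (vs!k))" using step[of k] Suc.prems by simp
    moreover have "col (vs!k) = (col (vs!0) \<noteq> odd k)" using Suc by simp
    ultimately show ?case by simp
  qed simp
  have "arc A (vs!(L-1)) (vs!0)" using arcs[of "L-1"] L2 by simp
  moreover have "vs!(L-1) < n" "vs!0 < n" using inn L2 by auto
  ultimately have "col (vs!(L-1)) \<noteq> col (vs!0)" by (rule colr[rotated 2])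
  moreover have "col (vs!(L-1)) = (col (vs!0) \<noteq> odd (L-1))" using alt[of "L-1"] L2 by simp
  ultimately have "odd (L-1)" by (cases "col (vs!0)") simp_all
  then show ?thesis using L2 unfolding L_def by simp
qed

lemma sign_arith:
  assumes "even L" "L \<ge> 2" "cs = (if L mod 4 = 0 then -1 else (1::int))"
  shows "(-1::int)^(L-1) * ((-1)^L * cs) = (-1)^(L div 2)"
proof -
  have o: "odd (L-1)" using assms by simp
  have "(-1::int)^(L-1) = -1" using o by simp
  moreover have "(-1::int)^L = 1" using assms(1) by simp
  moreover have "L mod 4 = 0 \<longleftrightarrow> even (L div 2)" using assms(1) by presburger
  ultimately show ?thesis using assms(3) by auto
qed

lemma core:
  assumes D: "A \<in> Delta1 n"
  shows "finite S \<Longrightarrow> p permutes S \<Longrightarrow> S \<subseteq> {0..<n} \<Longrightarrow> (\<forall>i\<in>S. p i \<noteq> i \<longrightarrow> A$$(i,p i) \<noteq> 0) \<Longrightarrow>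
     even (card {i\<in>S. p i \<noteq> i}) \<and> sign p * (\<Prod>i\<in>{i\<in>S. p i \<noteq> i}. - A$$(i,p i)) = (-1)^(card {i\<in>S. p i \<noteq> i} div 2)"
proof (induct "card S" arbitrary: S p rule: less_induct)
  case less
  have sd: "sidigraph n A" and bip: "bipartite_underlying n A"
    and cyc: "\<And>vs. dir_cycle A vs \<Longrightarrow> (length vs mod 4 = 0 \<longrightarrow> cycle_sign A vs = -1) \<and> (length vs mod 4 = 2 \<longrightarrow> cycle_sign A vs = 1)"
    using D unfolding Delta1_def by auto
  have Acar: "A \<in> carrier_mat n n" using sd unfolding sidigraph_def by simp
  note fin = less(2) and pS = less(3) and Ssub = less(4) and valid = less(5)
  show ?case
  proof (cases "\<forall>i\<in>S. p i = i")
    case True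
    have "p = id"
    proof
      fix x show "p x = id x" using True permutes_not_in[OF pS] by (cases "x \<in> S") auto
    qed
    moreover have "{i\<in>S. p i \<noteq> i} = {}" using True by auto
    ultimately show ?thesis by simp
  next
    case False
    then obtain s where s: "s \<in> S" "p s \<noteq> s" by auto
    have perm: "permutation p" using fin pS permutation_permutes by blast
    define L where "L = least_power p s"
    define c where "c = support p s"
    define T where "T = S - set c"
    define q where "q = (\<lambda>y. if y \<in> T then p y else y)"
    have q_perm: "q permutes T" using semidecomposition[OF pS fin, of s] unfolding q_def T_def c_def .
    have Lgt: "L > 1" using least_power_gt_one[OF perm s(2)] unfolding L_def by simp
    have pL: "(p ^^ L) s = s" using least_power_of_permutation(1)[OF perm] unfolding L_def by simp
    have c_len: "length c = L" by (simp add: c_def L_def)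
    have c_nth: "c ! k = (p ^^ k) s" if "k < L" for k using that by (simp add: c_def L_def)
    have c_dist: "distinct c" using cycle_of_permutation[OF perm] unfolding c_def .
    have pkS: "(p ^^ k) s \<in> S" for k
      using permutes_in_image[OF permutes_funpow[OF pS]] s(1) by blast
    have cS: "set c \<subseteq> S" using pkS by (auto simp: c_def)
    have c0: "c ! 0 = s" using c_nth[of 0] Lgt by simp
    have p_c: "p (c ! k) = c ! ((k+1) mod L)" if "k < L" for k
    proof (cases "k + 1 < L")
      case True
      then show ?thesis using that c_nth by simp
    next
      case False
      then have kL: "k + 1 = L" using that by simp
      have "p (c ! k) = (p ^^ (Suc k)) s" using c_nth that by simp
      also have "\<dots> = s" using pL kL by simp
      also have "\<dots> = c ! ((k+1) mod L)" using kL c0 by simp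
      finally show ?thesis .
    qed
    have c_in: "\<exists>k<L. x = c ! k" if "x \<in> set c" for x using that c_len by (auto simp: in_set_conv_nth)
    have moved_c: "p x \<noteq> x" if xc: "x \<in> set c" for x
    proof -
      obtain k where k: "k < L" "x = c ! k" using c_in[OF xc] by blast
      have "(k+1) mod L < L" using Lgt by simp
      moreover have "(k+1) mod L \<noteq> k"
      proof (cases "k+1 < L")
        case True then show ?thesis by simp
      next
        case False then have "k+1 = L" using k by simp
        then show ?thesis using Lgt by auto
      qed
      ultimately have "c ! ((k+1) mod L) \<noteq> c ! k" using c_dist k c_len by (simp add: nth_eq_iff_index_eq)
      then show ?thesis using p_c k by simp
    qed
    have comp: "cycle_of_list c \<circ> q = p"
    proof
      fix a
      consider "a \<in> S - set c" | "a \<in> set c" | "a \<notin> S" "a \<notin> set c" by blast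
      then show "(cycle_of_list c \<circ> q) a = p a"
      proof cases
        case 1
        have "(p ^^ 1) a \<in> set (support p a)"
          unfolding support_set[OF perm] by blast
        with 1 have "p a \<notin> set c"
          using disjoint_support'[OF perm, of a s] unfolding c_def by auto
        with 1 show ?thesis
          using id_outside_supp[of _ c] unfolding q_def T_def by simp
      next
        case 2 thus ?thesis
          using cycle_restrict[OF perm] unfolding q_def T_def c_def by simp
      next
        case 3 thus ?thesis
          using id_outside_supp[OF 3(2)] pS permutes_not_in unfolding q_def T_def by fastforce
      qed
    qed
    have s_c: "s \<in> set c" using nth_mem[of 0 c] c_len Lgt c0 by simp
    have finT: "finite T" using fin by (simp add: T_def)
    have cardT: "card T < card S" using s_c s(1) fin unfolding T_def by (intro psubset_card_mono) auto
    have TS: "T \<subseteq> {0..<n}" using Ssub by (auto simp: T_def)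
    have q_eq: "q x = p x" if "x \<in> T" for x using that by (simp add: q_def)
    have validq: "\<forall>i\<in>T. q i \<noteq> i \<longrightarrow> A$$(i, q i) \<noteq> 0" using valid q_eq by (auto simp: T_def)
    define MT where "MT = {i\<in>T. q i \<noteq> i}"
    have IH: "even (card MT) \<and> sign q * (\<Prod>i\<in>MT. - A$$(i,q i)) = (-1)^(card MT div 2)"
      using less(1)[OF cardT finT q_perm TS validq] unfolding MT_def .
    have Mdec: "{i\<in>S. p i \<noteq> i} = set c \<union> MT" using moved_c cS q_eq by (auto simp: MT_def T_def)
    have disj: "set c \<inter> MT = {}" by (auto simp: MT_def T_def)
    have finMT: "finite MT" using finT by (simp add: MT_def)
    have cn: "set c \<subseteq> {0..<n}" using cS Ssub by auto
    have c_lt: "c ! k < n" if "k < L" for k using cn nth_mem c_len that by force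
    have dc: "dir_cycle A c"
      unfolding dir_cycle_def
    proof (intro conjI allI impI)
      show "2 \<le> length c" using Lgt c_len by simp
      show "distinct c" by (rule c_dist)
      fix i assume i: "i < length c"
      have iL: "i < L" using i c_len by simp
      have ciS: "c ! i \<in> S" using cS nth_mem[OF i] by blast
      have "A $$ (c ! i, p (c ! i)) \<noteq> 0" using valid moved_c[OF nth_mem[OF i]] ciS by blast
      moreover have "(i+1) mod L < L" using Lgt by simp
      ultimately show "arc A (c ! i) (c ! ((i + 1) mod length c))"
        unfolding arc_def using Acar c_lt[OF iL] c_lt p_c[OF iL] c_len by simp
    qed
    have evenL: "even L" using dir_cycle_even[OF bip dc cn] c_len by simp
    have cs: "cycle_sign A c = (if L mod 4 = 0 then -1 else 1)"
    proof -
      have "L mod 4 = 0 \<or> L mod 4 = 2" using evenL by presburger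
      then show ?thesis using cyc[OF dc] c_len by auto
    qed
    have prodc: "(\<Prod>i\<in>set c. - A$$(i,p i)) = (-1)^L * cycle_sign A c"
    proof -
      have "(\<Prod>i\<in>set c. - A$$(i,p i)) = (\<Prod>k=0..<L. - A$$(c!k, p (c!k)))"
        using c_len by (simp add: prod.distinct_set_conv_list[OF c_dist] prod.list_conv_set_nth)
      also have "\<dots> = (\<Prod>k=0..<L. (-1) * A$$(c!k, c!((k+1) mod L)))"
        by (rule prod.cong) (auto simp: p_c)
      also have "\<dots> = (-1)^L * (\<Prod>k=0..<L. A$$(c!k, c!((k+1) mod L)))"
        by (subst prod.distrib) simp
      also have "\<dots> = (-1)^L * cycle_sign A c" by (simp add: cycle_sign_def c_len atLeast0LessThan)
      finally show ?thesis .
    qed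
    have signc: "sign (cycle_of_list c) = (-1)^(L-1)" using sign_cycle_of_list[OF c_dist] c_len by simp
    have permq: "permutation q" using finT q_perm permutation_permutes by blast
    have signp: "sign p = (-1)^(L-1) * sign q"
      using sign_compose[OF permutation_of_cycle permq, of c] comp signc by simp
    have prodp: "(\<Prod>i\<in>{i\<in>S. p i \<noteq> i}. - A$$(i,p i)) = (-1)^L * cycle_sign A c * (\<Prod>i\<in>MT. - A$$(i,q i))"
    proof -
      have "(\<Prod>i\<in>{i\<in>S. p i \<noteq> i}. - A$$(i,p i)) = (\<Prod>i\<in>set c. - A$$(i,p i)) * (\<Prod>i\<in>MT. - A$$(i,p i))"
        unfolding Mdec by (rule prod.union_disjoint) (use finMT disj in auto)
      moreover have "(\<Prod>i\<in>MT. - A$$(i,p i)) = (\<Prod>i\<in>MT. - A$$(i,q i))"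
        by (rule prod.cong) (auto simp: MT_def q_eq)
      ultimately show ?thesis using prodc by simp
    qed
    have cardp: "card {i\<in>S. p i \<noteq> i} = L + card MT"
      unfolding Mdec using card_Un_disjoint[OF _ finMT disj] distinct_card[OF c_dist] c_len by simp
    have ar: "(-1::int)^(L-1) * ((-1)^L * cycle_sign A c) = (-1)^(L div 2)"
      using sign_arith[OF evenL _ cs] Lgt by simp
    have dv: "(L + card MT) div 2 = L div 2 + card MT div 2" using evenL IH by presburger
    show ?thesis
    proof
      show "even (card {i\<in>S. p i \<noteq> i})" using cardp evenL IH by simp
      have "sign p * (\<Prod>i\<in>{i\<in>S. p i \<noteq> i}. - A$$(i,p i))
          = ((-1)^(L-1) * ((-1)^L * cycle_sign A c)) * (sign q * (\<Prod>i\<in>MT. - A$$(i,q i)))"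
        by (simp add: signp prodp mult_ac)
      also have "\<dots> = (-1)^(L div 2) * (-1)^(card MT div 2)" using ar IH by simp
      also have "\<dots> = (-1)^(card {i\<in>S. p i \<noteq> i} div 2)" using cardp dv by (simp add: power_add)
      finally show "sign p * (\<Prod>i\<in>{i\<in>S. p i \<noteq> i}. - A$$(i,p i)) = (-1)^(card {i\<in>S. p i \<noteq> i} div 2)" .
    qed
  qed
qed



definition G0 :: "real \<Rightarrow> real \<Rightarrow> real \<Rightarrow> real" where
 "G0 a b x = ((x-b) * ln ((x-b)^2+a^2) - 2*(x-b) + 2*a*arctan ((x-b)/a)) / 2
   + ((x+b) * ln ((x+b)^2+a^2) - 2*(x+b) + 2*a*arctan ((x+b)/a)) / 2 - 2*(x * ln x - x)"

lemma T_top: "a > 0 \<Longrightarrow> ((\<lambda>x::real. (x-b) * ln ((x-b)^2+a^2) / 2 + (x+b) * ln ((x+b)^2+a^2) / 2 - 2 * (x * ln x)) \<longlongrightarrow> 0) at_top"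
  by real_asymp

lemma arctan_top: "a > 0 \<Longrightarrow> ((\<lambda>x::real. arctan ((x+c)/a)) \<longlongrightarrow> pi/2) at_top"
proof -
  assume a: "a > 0"
  have "filterlim (\<lambda>x::real. (x+c)/a) at_top at_top" using a by real_asymp
  from filterlim_compose[OF tendsto_arctan_at_top this] show ?thesis by simp
qed

lemma G0_top: assumes a: "a > 0" shows "(G0 a b \<longlongrightarrow> pi * a) at_top"
proof -
  have eq: "G0 a b = (\<lambda>x. ((x-b) * ln ((x-b)^2+a^2) / 2 + (x+b) * ln ((x+b)^2+a^2) / 2 - 2 * (x * ln x))
     + a * (arctan ((x + (-b))/a) + arctan ((x+b)/a)))"
    by (rule ext) (simp add: G0_def algebra_simps diff_divide_distrib add_divide_distrib)
  have "((\<lambda>x. ((x-b) * ln ((x-b)^2+a^2) / 2 + (x+b) * ln ((x+b)^2+a^2) / 2 - 2 * (x * ln x))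
     + a * (arctan ((x + (-b))/a) + arctan ((x+b)/a))) \<longlongrightarrow> 0 + a * (pi/2 + pi/2)) at_top"
    by (intro tendsto_intros T_top arctan_top a)
  then show ?thesis unfolding eq by (simp add: mult.commute)
qed

lemma G0_zero: assumes a: "a > 0" shows "(G0 a b \<longlongrightarrow> 0) (at_right 0)"
proof -
  have pos1: "(0-b)^2+a^2 > 0" "(0+b)^2+a^2 > 0" using a by (auto intro: add_nonneg_pos)
  have l1: "((\<lambda>x. ((x-b) * ln ((x-b)^2+a^2) - 2*(x-b) + 2*a*arctan ((x-b)/a)) / 2
   + ((x+b) * ln ((x+b)^2+a^2) - 2*(x+b) + 2*a*arctan ((x+b)/a)) / 2) \<longlongrightarrow>
    ((0-b) * ln ((0-b)^2+a^2) - 2*(0-b) + 2*a*arctan ((0-b)/a)) / 2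
   + ((0+b) * ln ((0+b)^2+a^2) - 2*(0+b) + 2*a*arctan ((0+b)/a)) / 2) (at_right 0)"
    by (intro tendsto_intros) (use pos1 a in auto)
  have l2: "((\<lambda>x::real. x * ln x - x) \<longlongrightarrow> 0) (at_right 0)" by real_asymp
  have "(G0 a b \<longlongrightarrow> ((0-b) * ln ((0-b)^2+a^2) - 2*(0-b) + 2*a*arctan ((0-b)/a)) / 2
   + ((0+b) * ln ((0+b)^2+a^2) - 2*(0+b) + 2*a*arctan ((0+b)/a)) / 2 - 2 * 0) (at_right 0)"
    unfolding G0_def by (intro tendsto_intros l1 l2)
  moreover have "((0-b) * ln ((0-b)^2+a^2) - 2*(0-b) + 2*a*arctan ((0-b)/a)) / 2
   + ((0+b) * ln ((0+b)^2+a^2) - 2*(0+b) + 2*a*arctan ((0+b)/a)) / 2 - 2 * 0 = 0"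
    by (simp add: arctan_minus; simp add: field_simps)
  ultimately show ?thesis by simp
qed

lemma piece_deriv: assumes a: "a > 0"
  shows "((\<lambda>x. (x+c) * ln ((x+c)^2+a^2) - 2*(x+c) + 2*a*arctan ((x+c)/a)) has_real_derivative
     ln ((x+c)^2+a^2)) (at x)"
proof -
  have Ppos: "0 < (x + c)\<^sup>2 + a\<^sup>2" using a by (auto intro: add_nonneg_pos)
  have anz: "a \<noteq> 0" using a by simp
  have inv: "inverse (1 + ((x+c)/a)^2) = a^2/((x+c)^2+a^2)"
    using a Ppos by (simp add: field_simps)
  show ?thesis
    apply (rule derivative_eq_intros refl Ppos anz)+
    apply (simp add: inv)
    using Ppos a apply (simp add: field_simps power2_eq_square)
    done
qed

lemma G0_deriv: assumes a: "a > 0" and x: "x > 0"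
  shows "(G0 a b has_real_derivative (ln ((x-b)^2+a^2) / 2 + ln ((x+b)^2+a^2) / 2 - 2 * ln x)) (at x)"
proof -
  have d1: "((\<lambda>x. (x+(-b)) * ln ((x+(-b))^2+a^2) - 2*(x+(-b)) + 2*a*arctan ((x+(-b))/a)) has_real_derivative
     ln ((x+(-b))^2+a^2)) (at x)" by (rule piece_deriv[OF a])
  have d2: "((\<lambda>x. (x+b) * ln ((x+b)^2+a^2) - 2*(x+b) + 2*a*arctan ((x+b)/a)) has_real_derivative
     ln ((x+b)^2+a^2)) (at x)" by (rule piece_deriv[OF a])
  have d3: "((\<lambda>x. x * ln x - x) has_real_derivative ln x) (at x)"
    using x by (auto intro!: derivative_eq_intros)
  have "((\<lambda>x. ((x+(-b)) * ln ((x+(-b))^2+a^2) - 2*(x+(-b)) + 2*a*arctan ((x+(-b))/a)) / 2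
     + ((x+b) * ln ((x+b)^2+a^2) - 2*(x+b) + 2*a*arctan ((x+b)/a)) / 2 - 2 * (x * ln x - x))
     has_real_derivative (ln ((x+(-b))^2+a^2) / 2 + ln ((x+b)^2+a^2) / 2 - 2 * ln x)) (at x)"
    by (rule DERIV_diff[OF DERIV_add[OF DERIV_cdivide[OF d1] DERIV_cdivide[OF d2]] DERIV_cmult[OF d3]])
  then show ?thesis unfolding G0_def by simp
qed


definition Gz :: "complex \<Rightarrow> real \<Rightarrow> real" where
  "Gz z x = (if Re z = 0 then 0 else G0 \<bar>Re z\<bar> (Im z) x)"

definition Hf :: "complex list \<Rightarrow> real \<Rightarrow> real" where
  "Hf as x = (\<Sum>a\<leftarrow>as. Gz a x)"

lemma ln_half: "(p::real) > 0 \<Longrightarrow> q > 0 \<Longrightarrow> ln (p*q)/2 = ln p/2 + ln q/2"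
  by (simp add: ln_mult add_divide_distrib)

lemma ln_mult_pos: "(p::real) > 0 \<Longrightarrow> q > 0 \<Longrightarrow> ln (p*q) = ln p + ln q"
  by (simp add: ln_mult)

lemma cmod_link:
  fixes z :: complex and x :: real
  assumes "Re z \<noteq> 0"
  shows "ln ((x - Im z)^2 + \<bar>Re z\<bar>^2) / 2 + ln ((x + Im z)^2 + \<bar>Re z\<bar>^2) / 2 = ln (cmod (of_real x ^ 2 + z ^ 2))"
proof -
  have P1: "(x - Im z)^2 + \<bar>Re z\<bar>^2 > 0" "(x + Im z)^2 + \<bar>Re z\<bar>^2 > 0" using assms by (auto intro: add_nonneg_pos)
  have "(cmod (of_real x ^ 2 + z ^ 2))^2 = ((x - Im z)^2 + \<bar>Re z\<bar>^2) * ((x + Im z)^2 + \<bar>Re z\<bar>^2)"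
    unfolding cmod_power2 by (simp add: power2_eq_square algebra_simps)
  then have "cmod (of_real x ^ 2 + z ^ 2) = sqrt (((x - Im z)^2 + \<bar>Re z\<bar>^2) * ((x + Im z)^2 + \<bar>Re z\<bar>^2))"
    by (metis norm_ge_zero real_sqrt_unique)
  then have "ln (cmod (of_real x ^ 2 + z ^ 2)) = ln (((x - Im z)^2 + \<bar>Re z\<bar>^2) * ((x + Im z)^2 + \<bar>Re z\<bar>^2)) / 2"
    using P1 by (simp add: ln_sqrt)
  also have "\<dots> = ln ((x - Im z)^2 + \<bar>Re z\<bar>^2) / 2 + ln ((x + Im z)^2 + \<bar>Re z\<bar>^2) / 2"
    by (rule ln_half[OF P1])
  finally show ?thesis by (rule sym)
qed

lemma Gz_deriv:
  assumes x: "x > 0" and z: "Re z \<noteq> 0 \<or> z = 0"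
  shows "(Gz z has_real_derivative (ln (cmod (of_real x ^ 2 + z ^ 2)) - 2 * ln x)) (at x)"
proof (cases "Re z = 0")
  case True
  then have "z = 0" using z by simp
  moreover have "ln (x^2) - 2 * ln x = 0" using x by (simp add: ln_realpow)
  ultimately show ?thesis using True by (simp add: Gz_def[abs_def] norm_power)
next
  case False
  have "(G0 \<bar>Re z\<bar> (Im z) has_real_derivative (ln ((x - Im z)^2 + \<bar>Re z\<bar>^2) / 2 + ln ((x + Im z)^2 + \<bar>Re z\<bar>^2) / 2 - 2 * ln x)) (at x)"
    using G0_deriv[of "\<bar>Re z\<bar>" x "Im z"] False x by simp
  then show ?thesis using False cmod_link[OF False, of x] by (simp add: Gz_def[abs_def])
qed

lemma Gz_zero: "(Gz z \<longlongrightarrow> 0) (at_right 0)"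
  using G0_zero[of "\<bar>Re z\<bar>" "Im z"] by (cases "Re z = 0") (simp_all add: Gz_def[abs_def])

lemma Gz_top: "(Gz z \<longlongrightarrow> pi * \<bar>Re z\<bar>) at_top"
  using G0_top[of "\<bar>Re z\<bar>" "Im z"] by (cases "Re z = 0") (simp_all add: Gz_def[abs_def])

lemma Hf_zero: "(Hf as \<longlongrightarrow> 0) (at_right 0)"
proof (induct as)
  case Nil then show ?case by (simp add: Hf_def)
next
  case (Cons a as)
  have "((\<lambda>x. Gz a x + Hf as x) \<longlongrightarrow> 0 + 0) (at_right 0)"
    by (intro tendsto_add Gz_zero Cons)
  then show ?case by (simp add: Hf_def[abs_def])
qed

lemma Hf_top: "(Hf as \<longlongrightarrow> pi * (\<Sum>a\<leftarrow>as. \<bar>Re a\<bar>)) at_top"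
proof (induct as)
  case Nil then show ?case by (simp add: Hf_def)
next
  case (Cons a as)
  have "((\<lambda>x. Gz a x + Hf as x) \<longlongrightarrow> pi * \<bar>Re a\<bar> + pi * (\<Sum>a\<leftarrow>as. \<bar>Re a\<bar>)) at_top"
    by (intro tendsto_add Gz_top Cons)
  then show ?case by (simp add: Hf_def[abs_def] distrib_left)
qed

lemma Hf_deriv:
  assumes x: "x > 0" and z: "\<forall>a\<in>set as. Re a \<noteq> 0 \<or> a = 0"
  shows "(Hf as has_real_derivative (\<Sum>a\<leftarrow>as. ln (cmod (of_real x ^ 2 + a ^ 2)) - 2 * ln x)) (at x)"
  using z
proof (induct as)
  case Nil then show ?case by (simp add: Hf_def[abs_def])
next
  case (Cons a as)
  have "((\<lambda>x. Gz a x + Hf as x) has_real_derivative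
     (ln (cmod (of_real x ^ 2 + a ^ 2)) - 2 * ln x) + (\<Sum>a\<leftarrow>as. ln (cmod (of_real x ^ 2 + a ^ 2)) - 2 * ln x)) (at x)"
    using Cons by (intro DERIV_add Gz_deriv x) auto
  then show ?case by (simp add: Hf_def[abs_def])
qed

lemma sum_list_ln:
  assumes "\<forall>a\<in>set as. f a > (0::real)"
  shows "(\<Sum>a\<leftarrow>as. ln (f a) - c) = ln (\<Prod>a\<leftarrow>as. f a) - real (length as) * c"
  using assms
proof (induct as)
  case (Cons a as)
  have pp: "(\<Prod>a\<leftarrow>as. f a) > 0" using Cons.prems by (induct as) auto
  have fa: "f a > 0" using Cons.prems by simp
  have l: "ln (f a * (\<Prod>a\<leftarrow>as. f a)) = ln (f a) + ln (\<Prod>a\<leftarrow>as. f a)" by (rule ln_mult_pos[OF fa pp])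
  have IH: "(\<Sum>a\<leftarrow>as. ln (f a) - c) = ln (\<Prod>a\<leftarrow>as. f a) - real (length as) * c" using Cons by simp
  have "(\<Sum>a\<leftarrow>a#as. ln (f a) - c) = (ln (f a) - c) + (\<Sum>a\<leftarrow>as. ln (f a) - c)" by simp
  moreover have "(\<Prod>a\<leftarrow>a#as. f a) = f a * (\<Prod>a\<leftarrow>as. f a)" by simp
  moreover have "real (length (a#as)) * c = c + real (length as) * c" by (simp add: algebra_simps)
  ultimately have e2: "ln (\<Prod>a\<leftarrow>a#as. f a) = ln (f a) + ln (\<Prod>a\<leftarrow>as. f a)" using l by metis
  show ?case using e2 l IH \<open>real (length (a#as)) * c = c + real (length as) * c\<close>
    \<open>(\<Sum>a\<leftarrow>a#as. ln (f a) - c) = (ln (f a) - c) + (\<Sum>a\<leftarrow>as. ln (f a) - c)\<close> by linarith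
qed simp

lemma prod_list_split:
  "(\<Prod>a\<leftarrow>as. (f a :: complex) * g a) = (\<Prod>a\<leftarrow>as. f a) * (\<Prod>a\<leftarrow>as. g a)"
  by (induct as) (simp_all add: mult_ac)

lemma analytic:
  fixes as :: "complex list" and S :: "real \<Rightarrow> real"
  assumes ev: "\<And>x. (\<Prod>a\<leftarrow>as. (\<i> * of_real x - a)) = \<i> ^ length as * of_real (S x)"
    and par: "\<And>x. S (-x) = (-1) ^ length as * S x"
    and pos: "\<And>x. x > 0 \<Longrightarrow> S x > 0"
    and x: "x > 0"
  shows "(Hf as has_real_derivative (2 * ln (S x) - 2 * real (length as) * ln x)) (at x)"
proof -
  have Snz: "S b \<noteq> 0" if "b \<noteq> 0" for b
  proof (cases "b > 0")
    case True then show ?thesis using pos by force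
  next
    case False
    then have "-b > 0" using that by simp
    then have "S (-b) > 0" by (rule pos)
    then show ?thesis using par[of b] by (auto simp: power_0_left)
  qed
  have roots: "Re a \<noteq> 0 \<or> a = 0" if a: "a \<in> set as" for a
  proof (rule ccontr)
    assume "\<not> (Re a \<noteq> 0 \<or> a = 0)"
    then have r: "Re a = 0" "a \<noteq> 0" by auto
    then have ia: "Im a \<noteq> 0" using complex_eq_iff by force
    have "\<i> * of_real (Im a) - a = 0" using r by (simp add: complex_eq_iff)
    then have "(\<Prod>w\<leftarrow>as. (\<i> * of_real (Im a) - w)) = 0" 
      using a by (auto simp: prod_list_zero_iff)
    then have "S (Im a) = 0" using ev[of "Im a"] by simp
    then show False using Snz[OF ia] by simp
  qed
  have nz: "\<forall>a\<in>set as. cmod (of_real x ^ 2 + a ^ 2) > 0"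
  proof
    fix a assume a: "a \<in> set as"
    have "(\<i> * of_real x - a) * (\<i> * of_real (-x) - a) = of_real x ^ 2 + a ^ 2"
      by (simp add: algebra_simps power2_eq_square)
    moreover have "\<i> * of_real x - a \<noteq> 0"
    proof
      assume "\<i> * of_real x - a = 0"
      then have "(\<Prod>w\<leftarrow>as. (\<i> * of_real x - w)) = 0" using a by (auto simp: prod_list_zero_iff)
      then show False using ev[of x] pos[OF x] by simp
    qed
    moreover have "\<i> * of_real (-x) - a \<noteq> 0"
    proof
      assume "\<i> * of_real (-x) - a = 0"
      then have "(\<Prod>w\<leftarrow>as. (\<i> * of_real (-x) - w)) = 0" using a by (auto simp: prod_list_zero_iff)
      then have "\<i> ^ length as * of_real (S (-x)) = 0" unfolding ev .
      then show False using Snz[of "-x"] x by simp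
    qed
    ultimately show "cmod (of_real x ^ 2 + a ^ 2) > 0" by (metis mult_eq_0_iff zero_less_norm_iff)
  qed
  have prodeq: "(\<Prod>a\<leftarrow>as. cmod (of_real x ^ 2 + a ^ 2)) = S x ^ 2"
  proof -
    have "(\<Prod>a\<leftarrow>as. of_real x ^ 2 + a ^ 2) = (\<Prod>a\<leftarrow>as. (\<i> * of_real x - a) * (\<i> * of_real (-x) - a))"
      by (rule arg_cong[where f=prod_list], rule map_cong) (simp_all add: algebra_simps power2_eq_square)
    also have "\<dots> = (\<i> ^ length as * of_real (S x)) * (\<i> ^ length as * of_real (S (-x)))"
      unfolding prod_list_split ev ..
    finally have "cmod (\<Prod>a\<leftarrow>as. of_real x ^ 2 + a ^ 2) = \<bar>S x\<bar> * \<bar>S (-x)\<bar>"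
      by (simp add: norm_mult norm_power)
    moreover have "\<bar>S (-x)\<bar> = \<bar>S x\<bar>" using par[of x] by (simp add: abs_mult power_abs)
    moreover have "cmod (\<Prod>a\<leftarrow>as. of_real x ^ 2 + a ^ 2) = (\<Prod>a\<leftarrow>as. cmod (of_real x ^ 2 + a ^ 2))"
      by (induct as) (simp_all add: norm_mult)
    ultimately show ?thesis using pos[OF x] by (simp add: power2_eq_square)
  qed
  have "(Hf as has_real_derivative (\<Sum>a\<leftarrow>as. ln (cmod (of_real x ^ 2 + a ^ 2)) - 2 * ln x)) (at x)"
    using Hf_deriv[OF x] roots by blast
  moreover have "(\<Sum>a\<leftarrow>as. ln (cmod (of_real x ^ 2 + a ^ 2)) - 2 * ln x) = 2 * ln (S x) - 2 * real (length as) * ln x"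
    using sum_list_ln[OF nz, of "2 * ln x"] prodeq pos[OF x] by (simp add: ln_realpow)
  ultimately show ?thesis by simp
qed

lemma final_order:
  fixes D :: "real \<Rightarrow> real"
  assumes d: "\<And>x. x > 0 \<Longrightarrow> (D has_real_derivative D' x) (at x)"
    and dpos: "\<And>x. x > 0 \<Longrightarrow> D' x > 0"
    and l0: "(D \<longlongrightarrow> 0) (at_right 0)" and lt: "(D \<longlongrightarrow> L) at_top"
  shows "L > 0"
proof -
  have inc: "D a < D b" if "0 < a" "a < b" for a b
  proof (rule DERIV_pos_imp_increasing[OF that(2)])
    fix x assume "a \<le> x" "x \<le> b"
    then have "x > 0" using that by simp
    then show "\<exists>y. (D has_real_derivative y) (at x) \<and> 0 < y" using d dpos by blast
  qed
  have "0 \<le> D 1"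
  proof (rule tendsto_le[OF _ tendsto_const l0])
    show "at_right (0::real) \<noteq> bot" by simp
    show "eventually (\<lambda>x. D x \<le> D 1) (at_right 0)"
      unfolding eventually_at_right_field
      by (rule exI[of _ 1]) (auto intro: less_imp_le inc)
  qed
  moreover have "D 1 < D 2" using inc by simp
  moreover have "D 2 \<le> L"
  proof (rule tendsto_le[OF _ lt tendsto_const])
    show "at_top \<noteq> (bot :: real filter)" by simp
    show "eventually (\<lambda>x. D 2 \<le> D x) at_top"
      unfolding eventually_at_top_linorder
      by (rule exI[of _ 2]) (auto intro: inc simp: le_less)
  qed
  ultimately show ?thesis by simp
qed



definition Pn :: "nat \<Rightarrow> (nat \<Rightarrow> nat) set" where "Pn n = {p. p permutes {0..<n}}"
definition fixc :: "nat \<Rightarrow> (nat \<Rightarrow> nat) \<Rightarrow> nat" where "fixc n p = card {i\<in>{0..<n}. p i = i}"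
definition mvc :: "nat \<Rightarrow> (nat \<Rightarrow> nat) \<Rightarrow> nat" where "mvc n p = card {i\<in>{0..<n}. p i \<noteq> i}"
definition tB :: "int mat \<Rightarrow> nat \<Rightarrow> (nat \<Rightarrow> nat) \<Rightarrow> int" where
  "tB B n p = sign p * (\<Prod>i\<in>{i\<in>{0..<n}. p i \<noteq> i}. - B$$(i,p i))"

lemma fix_mv: "fixc n p + mvc n p = n"
proof -
  have "{i\<in>{0..<n}. p i = i} \<union> {i\<in>{0..<n}. p i \<noteq> i} = {0..<n}" by auto
  moreover have "card ({i\<in>{0..<n}. p i = i} \<union> {i\<in>{0..<n}. p i \<noteq> i}) = card {i\<in>{0..<n}. p i = i} + card {i\<in>{0..<n}. p i \<noteq> i}"
    by (rule card_Un_disjoint) auto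
  ultimately show ?thesis unfolding fixc_def mvc_def by simp
qed

lemma poly_char:
  assumes B: "B \<in> carrier_mat n n" and d: "\<forall>i<n. B$$(i,i) = 0"
  shows "poly (char_poly (map_mat complex_of_int B)) y = (\<Sum>p\<in>Pn n. of_int (tB B n p) * y ^ fixc n p)"
proof -
  let ?M = "map_mat complex_of_int B"
  have M: "?M \<in> carrier_mat n n" using B by simp
  have ent: "(- char_matrix ?M y) $$ (i,j) = (if j = i then y else - of_int (B$$(i,j)))" if "i<n" "j<n" for i j
    using that B d by (auto simp: char_matrix_def)
  have "poly (char_poly ?M) y = det (- char_matrix ?M y)" by (rule char_poly_matrix[OF M])
  also have "\<dots> = (\<Sum>p\<in>{p. p permutes {0..<n}}. signof p * (\<Prod>i=0..<n. (- char_matrix ?M y) $$ (i, p i)))"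
    by (rule det_def') (use M in simp)
  also have "\<dots> = (\<Sum>p\<in>Pn n. of_int (tB B n p) * y ^ fixc n p)"
    unfolding Pn_def
  proof (rule sum.cong[OF refl])
    fix p assume "p \<in> {p. p permutes {0..<n}}"
    then have p: "p permutes {0..<n}" by simp
    have pi: "p i < n" if "i < n" for i using permutes_in_image[OF p] that by simp
    have "(\<Prod>i=0..<n. (- char_matrix ?M y) $$ (i, p i)) = (\<Prod>i=0..<n. if p i = i then y else - of_int (B$$(i,p i)))"
      by (rule prod.cong) (auto simp: ent pi)
    also have "\<dots> = (\<Prod>i\<in>{0..<n} \<inter> {i. p i = i}. y) * (\<Prod>i\<in>{0..<n} \<inter> - {i. p i = i}. - of_int (B$$(i,p i)))"
      by (rule prod.If_cases) simp
    also have "\<dots> = y ^ fixc n p * of_int (\<Prod>i\<in>{i\<in>{0..<n}. p i \<noteq> i}. - B$$(i,p i))"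
    proof -
      have e1: "{0..<n} \<inter> {i. p i = i} = {i\<in>{0..<n}. p i = i}" by auto
      have e2: "{0..<n} \<inter> - {i. p i = i} = {i\<in>{0..<n}. p i \<noteq> i}" by auto
      show ?thesis unfolding e1 e2 by (simp add: fixc_def)
    qed
    finally show "signof p * (\<Prod>i=0..<n. (- char_matrix ?M y) $$ (i, p i)) = of_int (tB B n p) * y ^ fixc n p"
      by (simp add: tB_def)
  qed
  finally show ?thesis .
qed

lemma eval_i:
  assumes B: "B \<in> carrier_mat n n" and d: "\<forall>i<n. B$$(i,i) = 0"
    and W: "W \<subseteq> Pn n" and t: "\<forall>p\<in>Pn n. tB B n p = (if p \<in> W then (-1)^(mvc n p div 2) else 0)"
    and ev: "\<forall>p\<in>W. even (mvc n p)"
  shows "poly (char_poly (map_mat complex_of_int B)) (\<i> * of_real x) = \<i> ^ n * of_real (\<Sum>p\<in>W. x ^ fixc n p)"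
proof -
  have fin: "finite (Pn n)" unfolding Pn_def by (rule finite_permutations) simp
  have trm: "of_int ((-1::int)^(mvc n p div 2)) * (\<i> * of_real x) ^ fixc n p = \<i> ^ n * of_real (x ^ fixc n p)"
    if "p \<in> W" for p
  proof -
    have e: "even (mvc n p)" using ev that by simp
    have "of_int ((-1::int)^(mvc n p div 2)) = (\<i>::complex) ^ mvc n p"
    proof -
      have "(\<i>::complex) ^ mvc n p = \<i> ^ (2 * (mvc n p div 2))" using e by simp
      also have "\<dots> = (-1) ^ (mvc n p div 2)" by (simp add: power_mult)
      finally show ?thesis by simp
    qed
    then have "of_int ((-1::int)^(mvc n p div 2)) * (\<i> * of_real x) ^ fixc n p
      = \<i> ^ (mvc n p + fixc n p) * of_real (x ^ fixc n p)"
      by (simp add: power_add power_mult_distrib)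
    also have "mvc n p + fixc n p = n" using fix_mv[of n p] by simp
    finally show ?thesis .
  qed
  have "poly (char_poly (map_mat complex_of_int B)) (\<i> * of_real x) = (\<Sum>p\<in>Pn n. of_int (tB B n p) * (\<i> * of_real x) ^ fixc n p)"
    by (rule poly_char[OF B d])
  also have "\<dots> = (\<Sum>p\<in>W. \<i> ^ n * of_real (x ^ fixc n p))"
    by (rule sum.mono_neutral_cong_right[OF fin W]) (use t trm W in auto)
  also have "\<dots> = \<i> ^ n * of_real (\<Sum>p\<in>W. x ^ fixc n p)"
    by (simp add: sum_distrib_left)
  finally show ?thesis .
qed

lemma S_props:
  assumes W: "W \<subseteq> Pn n" and idW: "id \<in> W" and ev: "\<forall>p\<in>W. even (mvc n p)"
  shows "(\<Sum>p\<in>W. (-x) ^ fixc n p) = (-1)^n * (\<Sum>p\<in>W. (x::real) ^ fixc n p)"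
    and "x > 0 \<Longrightarrow> (\<Sum>p\<in>W. (x::real) ^ fixc n p) > 0"
proof -
  have fin: "finite W" using W by (rule finite_subset) (simp add: Pn_def finite_permutations)
  have "(-x) ^ fixc n p = (-1)^n * x ^ fixc n p" if "p \<in> W" for p
  proof -
    have "(-1::real)^n = (-1)^(fixc n p + mvc n p)" using fix_mv[of n p] by simp
    also have "\<dots> = (-1)^fixc n p" using ev that by (simp add: power_add)
    finally show ?thesis by (simp add: power_minus[of x])
  qed
  then show "(\<Sum>p\<in>W. (-x) ^ fixc n p) = (-1)^n * (\<Sum>p\<in>W. (x::real) ^ fixc n p)"
    by (simp add: sum_distrib_left)
  show "x > 0 \<Longrightarrow> (\<Sum>p\<in>W. (x::real) ^ fixc n p) > 0"
    using fin idW by (intro sum_pos) auto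
qed


lemma poly_lin: fixes y :: complex shows "poly (\<Prod>a\<leftarrow>as. [:-a, 1:]) y = (\<Prod>a\<leftarrow>as. y - a)"
  by (induct as) (auto simp: algebra_simps)

lemma proots_lin: "proots (\<Prod>a\<leftarrow>as. [:-a, 1:]) = mset (as :: complex list)"
proof (induct as)
  case (Cons a as)
  have nz: "(\<Prod>a\<leftarrow>as. [:-a, 1:]) \<noteq> 0"
    by (auto simp: prod_list_zero_iff)
  have "proots ([:-a, 1:] * (\<Prod>a\<leftarrow>as. [:-a, 1:])) = proots [:-a, 1:] + proots (\<Prod>a\<leftarrow>as. [:-a, 1:])"
    by (rule proots_mult) (use nz in auto)
  then show ?case using Cons by simp
qed simp

lemma sum_mset_list: "(\<Sum>z\<in>#mset xs. f z) = (\<Sum>z\<leftarrow>xs. f z)"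
  by (induct xs) auto

lemma energy_list:
  assumes "A \<in> carrier_mat n n"
  obtains as where "length as = n" "energy A = (\<Sum>a\<leftarrow>as. \<bar>Re a\<bar>)"
    "\<And>y. poly (char_poly (map_mat complex_of_int A)) y = (\<Prod>a\<leftarrow>as. y - a)"
proof -
  have M: "map_mat complex_of_int A \<in> carrier_mat n n" using assms by simp
  obtain as where as: "char_poly (map_mat complex_of_int A) = (\<Prod>a\<leftarrow>as. [:-a, 1:])" "length as = n"
    using char_poly_factorized[OF M] by blast
  have "energy A = (\<Sum>a\<leftarrow>as. \<bar>Re a\<bar>)"
    unfolding energy_def eigenvalues_ms_def as(1) proots_lin sum_mset_list ..
  moreover have "\<And>y. poly (char_poly (map_mat complex_of_int A)) y = (\<Prod>a\<leftarrow>as. y - a)"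
    unfolding as(1) poly_lin ..
  ultimately show ?thesis using that as(2) by blast
qed

theorem theorem3p5:
  fixes n :: nat and A :: "int mat" and u v :: nat
  assumes "A \<in> Delta1 n"
    and "u < n" and "v < n"
    and "arc A u v" and "arc A v u"
  shows "energy (delete_arc A u v) < energy A"
proof -
  have sd: "sidigraph n A" using assms(1) unfolding Delta1_def by simp
  then have Acar: "A \<in> carrier_mat n n" and d0: "\<forall>i<n. A$$(i,i) = 0" unfolding sidigraph_def by auto
  define A' where "A' = delete_arc A u v"
  have A'ent: "A' $$ (i,j) = (if (i,j) = (u,v) then 0 else A$$(i,j))" if "i<n" "j<n" for i j
    using that Acar by (simp add: A'_def delete_arc_def)
  have A'car: "A' \<in> carrier_mat n n" using Acar by (simp add: A'_def delete_arc_def)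
  have d0': "\<forall>i<n. A'$$(i,i) = 0" using A'ent d0 by simp
  have Auv: "A$$(u,v) \<noteq> 0" "A$$(v,u) \<noteq> 0" using assms(4,5) by (auto simp: arc_def)
  have uv: "u \<noteq> v" using Auv d0 assms(2) by auto
  define good where "good p = (\<forall>i<n. p i \<noteq> i \<longrightarrow> A$$(i,p i) \<noteq> 0)" for p :: "nat \<Rightarrow> nat"
  define W where "W = {p\<in>Pn n. good p}"
  define W' where "W' = {p\<in>Pn n. good p \<and> p u \<noteq> v}"
  have WP: "W \<subseteq> Pn n" "W' \<subseteq> Pn n" "W' \<subseteq> W" by (auto simp: W_def W'_def)
  have coreA: "even (mvc n p) \<and> tB A n p = (-1)^(mvc n p div 2)" if "p \<in> Pn n" "good p" for p
    using core[OF assms(1), of "{0..<n}" p] that unfolding Pn_def good_def mvc_def tB_def by auto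
  have tA: "\<forall>p\<in>Pn n. tB A n p = (if p \<in> W then (-1)^(mvc n p div 2) else 0)"
  proof
    fix p assume p: "p \<in> Pn n"
    show "tB A n p = (if p \<in> W then (-1)^(mvc n p div 2) else 0)"
    proof (cases "good p")
      case True then show ?thesis using coreA p by (simp add: W_def)
    next
      case False
      then obtain i where i: "i < n" "p i \<noteq> i" "A$$(i,p i) = 0" unfolding good_def by auto
      have "(\<Prod>i\<in>{i\<in>{0..<n}. p i \<noteq> i}. - A$$(i,p i)) = 0"
        by (rule prod_zero) (use i in auto)
      then show ?thesis using False by (simp add: tB_def W_def)
    qed
  qed
  have tA': "\<forall>p\<in>Pn n. tB A' n p = (if p \<in> W' then (-1)^(mvc n p div 2) else 0)"
  proof
    fix p assume p: "p \<in> Pn n"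
    have pi: "p i < n" if "i < n" for i using p that permutes_in_image unfolding Pn_def by fastforce
    show "tB A' n p = (if p \<in> W' then (-1)^(mvc n p div 2) else 0)"
    proof (cases "p u = v")
      case True
      have "(\<Prod>i\<in>{i\<in>{0..<n}. p i \<noteq> i}. - A'$$(i,p i)) = 0"
        by (rule prod_zero) (use True uv assms(2,3) A'ent in auto)
      then show ?thesis using True by (simp add: tB_def W'_def)
    next
      case False
      have "(\<Prod>i\<in>{i\<in>{0..<n}. p i \<noteq> i}. - A'$$(i,p i)) = (\<Prod>i\<in>{i\<in>{0..<n}. p i \<noteq> i}. - A$$(i,p i))"
        by (rule prod.cong) (use False A'ent pi in auto)
      then have "tB A' n p = tB A n p" by (simp add: tB_def)
      then show ?thesis using tA p False by (auto simp: W_def W'_def)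
    qed
  qed
  have evW: "\<forall>p\<in>W. even (mvc n p)" using coreA by (auto simp: W_def)
  have evW': "\<forall>p\<in>W'. even (mvc n p)" using evW WP by auto
  have idP: "id \<in> Pn n" by (simp add: Pn_def)
  have idW: "id \<in> W" "id \<in> W'" using idP uv by (auto simp: W_def W'_def good_def)
  define S where "S x = (\<Sum>p\<in>W. x ^ fixc n p)" for x :: real
  define S' where "S' x = (\<Sum>p\<in>W'. x ^ fixc n p)" for x :: real
  have evA: "poly (char_poly (map_mat complex_of_int A)) (\<i> * of_real x) = \<i> ^ n * of_real (S x)" for x
    unfolding S_def by (rule eval_i[OF Acar d0 WP(1) tA evW])
  have evA': "poly (char_poly (map_mat complex_of_int A')) (\<i> * of_real x) = \<i> ^ n * of_real (S' x)" for x
    unfolding S'_def by (rule eval_i[OF A'car d0' WP(2) tA' evW'])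
  have parS: "S (-x) = (-1)^n * S x" for x unfolding S_def by (rule S_props(1)[OF WP(1) idW(1) evW])
  have parS': "S' (-x) = (-1)^n * S' x" for x unfolding S'_def by (rule S_props(1)[OF WP(2) idW(2) evW'])
  have posS: "S x > 0" if "x > 0" for x unfolding S_def by (rule S_props(2)[OF WP(1) idW(1) evW that])
  have posS': "S' x > 0" if "x > 0" for x unfolding S'_def by (rule S_props(2)[OF WP(2) idW(2) evW' that])
  define tr where "tr = Transposition.transpose u v"
  have trP: "tr \<in> Pn n" unfolding Pn_def tr_def using assms(2,3) by (auto intro: permutes_swap_id)
  have trW: "tr \<in> W - W'"
  proof -
    have "good tr" unfolding good_def tr_def using Auv by (auto simp: transpose_def)
    moreover have "tr u = v" by (simp add: tr_def)
    ultimately show ?thesis using trP by (simp add: W_def W'_def)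
  qed
  have finW: "finite W" using WP(1) by (rule finite_subset) (simp add: Pn_def finite_permutations)
  have strict: "S' x < S x" if x: "x > 0" for x
  proof -
    have "S x = S' x + (\<Sum>p\<in>W - W'. x ^ fixc n p)"
      unfolding S_def S'_def using sum.subset_diff[OF WP(3) finW] by (simp add: add.commute)
    moreover have "(\<Sum>p\<in>W - W'. x ^ fixc n p) > 0"
      using finW trW x by (intro sum_pos) auto
    ultimately show ?thesis by simp
  qed
  obtain as where as: "length as = n" "energy A = (\<Sum>a\<leftarrow>as. \<bar>Re a\<bar>)"
    "\<And>y. poly (char_poly (map_mat complex_of_int A)) y = (\<Prod>a\<leftarrow>as. y - a)"
    using energy_list[OF Acar] by blast
  obtain as' where as': "length as' = n" "energy A' = (\<Sum>a\<leftarrow>as'. \<bar>Re a\<bar>)"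
    "\<And>y. poly (char_poly (map_mat complex_of_int A')) y = (\<Prod>a\<leftarrow>as'. y - a)"
    using energy_list[OF A'car] by blast
  have dH: "(Hf as has_real_derivative (2 * ln (S x) - 2 * real n * ln x)) (at x)" if "x > 0" for x
    using analytic[of as S x] as(1) evA as(3) parS posS that by simp
  have dH': "(Hf as' has_real_derivative (2 * ln (S' x) - 2 * real n * ln x)) (at x)" if "x > 0" for x
    using analytic[of as' S' x] as'(1) evA' as'(3) parS' posS' that by simp
  define D where "D x = Hf as x - Hf as' x" for x
  have "pi * (\<Sum>a\<leftarrow>as. \<bar>Re a\<bar>) - pi * (\<Sum>a\<leftarrow>as'. \<bar>Re a\<bar>) > 0"
  proof (rule final_order)
    show "(D has_real_derivative ((2 * ln (S x) - 2 * real n * ln x) - (2 * ln (S' x) - 2 * real n * ln x))) (at x)"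
      if "x > 0" for x
      unfolding D_def[abs_def] using dH[OF that] dH'[OF that] by (rule DERIV_diff)
    show "(2 * ln (S x) - 2 * real n * ln x) - (2 * ln (S' x) - 2 * real n * ln x) > 0" if "x > 0" for x
      using strict[OF that] posS'[OF that] by simp
    show "(D \<longlongrightarrow> 0) (at_right 0)"
      unfolding D_def[abs_def] using tendsto_diff[OF Hf_zero[of as] Hf_zero[of as']] by simp
    show "(D \<longlongrightarrow> pi * (\<Sum>a\<leftarrow>as. \<bar>Re a\<bar>) - pi * (\<Sum>a\<leftarrow>as'. \<bar>Re a\<bar>)) at_top"
      unfolding D_def[abs_def] by (rule tendsto_diff[OF Hf_top Hf_top])
  qed
  then have "(\<Sum>a\<leftarrow>as'. \<bar>Re a\<bar>) < (\<Sum>a\<leftarrow>as. \<bar>Re a\<bar>)" by simp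
  then show ?thesis using as(2) as'(2) unfolding A'_def by simp
qed


end
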